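(* Let $(X,\Sigma)$ be a measurable space and $p$ a transition function on it with associated operator $A$. Suppose $A$ has a disjoint countably additive cycle of measures $K=\{\mu_1,\dots,\mu_m\}\subset S_{ca}$. Then there is a system of pairwise disjoint sets $S=\{D_1,\dots,D_m\}$, $D_i\in\Sigma$, such that $\mu_i(D_j)=1$ if $i=j$ and $\mu_i(D_j)=0$ if $i\ne j$, and $p(x,D_{i+1})=1$ for $\mu_i$-almost every $x\in D_i$, $i=1,\dots,m-1$, and $p(x,D_1)=1$ for $\mu_m$-almost every $x\in D_m$ (so $S$ is a singular cycle of sets of states in the $\mu_i$-almost everywhere sense).
   Context: $X$ is an arbitrary infinite set and $\Sigma$ a $\sigma$-algebra of subsets of $X$ containing all one-point sets. $ca(X,\Sigma)$ denotes the bounded countably additive real measures on $\Sigma$ and $S_{ca}=\{\mu\in ca(X,\Sigma):\mu\ge0,\ \mu(X)=1\}$. A transition function is a map $p(x,E)$ with $0\le p(x,E)\le1$, $p(x,X)=1$, $p(\cdot,E)$ bounded $\Sigma$-measurable for every $E\in\Sigma$, and $p(x,\cdot)$ countably additive for every $x\in X$. The Markov operator is $A\mu(E)=\int_X p(x,E)\,\mu(dx)$. A cycle of measures of $A$ is a finite numbered set $\{\mu_1,\dots,\mu_m\}$ of pairwise different positive measures with $A\mu_i=\mu_{i+1}$ ($1\le i\le m-1$), $A\mu_m=\mu_1$. For positive measures, $(\mu\wedge\nu)(E)=\inf\{\mu(C)+\nu(E\setminus C):C\subset E,C\in\Sigma\}$, and $\mu,\nu$ are disjoint if $\mu\wedge\nu=0$;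 a cycle is disjoint if its measures are pairwise disjoint. *)

theory Defs
  imports "HOL-Analysis.Analysis"
begin

definition standing_space :: "'a measure \<Rightarrow> bool" where
  "standing_space M \<longleftrightarrow> infinite (space M) \<and> (\<forall>x\<in>space M. {x} \<in> sets M)"

definition transition_function :: "'a measure \<Rightarrow> ('a \<Rightarrow> 'a set \<Rightarrow> real) \<Rightarrow> bool" where
  "transition_function M p \<longleftrightarrow>
     (\<forall>x\<in>space M. \<forall>E\<in>sets M. 0 \<le> p x E \<and> p x E \<le> 1) \<and>
     (\<forall>x\<in>space M. p x (space M) = 1) \<and>
     (\<forall>E\<in>sets M. (\<lambda>x. p x E) \<in> borel_measurable M) \<and>
     (\<forall>x\<in>space M. countably_additive (sets M) (\<lambda>E. ennreal (p x E)))"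

definition markov_op :: "('a \<Rightarrow> 'a set \<Rightarrow> real) \<Rightarrow> 'a measure \<Rightarrow> 'a set \<Rightarrow> real" where
  "markov_op p \<mu> E = (\<integral>x. p x E \<partial>\<mu>)"

text \<open>S_ca: probability (countably additive, positive, total mass 1) measures on (X, Sigma).\<close>
definition S_ca :: "'a measure \<Rightarrow> 'a measure set" where
  "S_ca M = {\<mu>. sets \<mu> = sets M \<and> emeasure \<mu> (space \<mu>) = 1}"

definition meas_inf :: "'a measure \<Rightarrow> 'a measure \<Rightarrow> 'a measure \<Rightarrow> 'a set \<Rightarrow> real" where
  "meas_inf M \<mu> \<nu> E = (INF C\<in>{C\<in>sets M. C \<subseteq> E}. measure \<mu> C + measure \<nu> (E - C))"

definition meas_disjoint :: "'a measure \<Rightarrow> 'a measure \<Rightarrow> 'a measure \<Rightarrow> bool" where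
  "meas_disjoint M \<mu> \<nu> \<longleftrightarrow> (\<forall>E\<in>sets M. meas_inf M \<mu> \<nu> E = 0)"

definition cyc_next :: "nat \<Rightarrow> nat \<Rightarrow> nat" where
  "cyc_next m i = (if i < m then i + 1 else 1)"

definition is_cycle :: "'a measure \<Rightarrow> ('a \<Rightarrow> 'a set \<Rightarrow> real) \<Rightarrow> nat \<Rightarrow> (nat \<Rightarrow> 'a measure) \<Rightarrow> bool" where
  "is_cycle M p m \<mu> \<longleftrightarrow> m \<ge> 1 \<and>
     (\<forall>i\<in>{1..m}. \<mu> i \<in> S_ca M) \<and>
     (\<forall>i\<in>{1..m}. \<forall>j\<in>{1..m}. i \<noteq> j \<longrightarrow> \<mu> i \<noteq> \<mu> j) \<and>
     (\<forall>i\<in>{1..m}. \<forall>E\<in>sets M. measure (\<mu> (cyc_next m i)) E = markov_op p (\<mu> i) E)"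

definition is_disjoint_cycle :: "'a measure \<Rightarrow> ('a \<Rightarrow> 'a set \<Rightarrow> real) \<Rightarrow> nat \<Rightarrow> (nat \<Rightarrow> 'a measure) \<Rightarrow> bool" where
  "is_disjoint_cycle M p m \<mu> \<longleftrightarrow> is_cycle M p m \<mu> \<and>
     (\<forall>i\<in>{1..m}. \<forall>j\<in>{1..m}. i \<noteq> j \<longrightarrow> meas_disjoint M (\<mu> i) (\<mu> j))"

end

theory Submission
  imports Defs
begin

lemma small_zero:
  fixes a :: real
  assumes "0 \<le> a" "\<And>N. a \<le> 2 * (1/2)^N"
  shows "a = 0"
proof (rule ccontr)
  assume "a \<noteq> 0"
  then have "a/2 > 0" using assms(1) by simp
  then obtain N where "(1/2::real)^N < a/2" using real_arch_pow_inv[of "a/2" "1/2"] by auto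
  with assms(2)[of N] show False by simp
qed

lemma sep_lemma:
  fixes M \<mu> \<nu> :: "'a measure"
  assumes sm: "sets \<mu> = sets M" and sn: "sets \<nu> = sets M"
    and fm: "finite_measure \<mu>" and fn: "finite_measure \<nu>"
    and inf0: "meas_inf M \<mu> \<nu> (space M) = 0"
  shows "\<exists>C\<in>sets M. C \<in> null_sets \<mu> \<and> space M - C \<in> null_sets \<nu>"
proof -
  have spm: "space \<mu> = space M" using sm sets_eq_imp_space_eq by blast
  have spn: "space \<nu> = space M" using sn sets_eq_imp_space_eq by blast
  let ?S = "{C\<in>sets M. C \<subseteq> space M}"
  let ?f = "\<lambda>C. measure \<mu> C + measure \<nu> (space M - C)"
  have bdd: "bdd_below (?f ` ?S)" by (intro bdd_belowI[of _ 0]) auto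
  have ne: "?S \<noteq> {}" by auto
  have "\<forall>n. \<exists>C\<in>?S. ?f C < (1/2)^n"
  proof
    fix n :: nat
    have "(INF C\<in>?S. ?f C) < (1/2)^n" using inf0 unfolding meas_inf_def by simp
    then show "\<exists>C\<in>?S. ?f C < (1/2)^n" using cINF_less_iff[OF ne bdd] by blast
  qed
  then obtain C where C: "\<And>n. C n \<in> ?S" "\<And>n. ?f (C n) < (1/2)^n" by metis
  define U where "U N = (\<Union>n. C (n+N))" for N
  define G where "G = (\<Inter>N. U N)"
  have Cs: "C n \<in> sets M" for n using C by auto
  have Us: "U N \<in> sets M" for N unfolding U_def using Cs by auto
  have Gs: "G \<in> sets M" unfolding G_def using Us by auto
  have mu_C: "measure \<mu> (C n) \<le> (1/2)^n" for n using C(2)[of n] measure_nonneg[of \<nu> "space M - C n"] by linarith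
  have nu_C: "measure \<nu> (space M - C n) \<le> (1/2)^n" for n using C(2)[of n] measure_nonneg[of \<mu> "C n"] by linarith
  have muU: "measure \<mu> (U N) \<le> 2 * (1/2)^N" for N
  proof -
    have summ: "summable (\<lambda>n. (1/2::real)^(n+N))"
      by (simp add: power_add summable_mult2 summable_geometric)
    have s2: "summable (\<lambda>n. measure \<mu> (C (n+N)))"
      by (rule summable_comparison_test'[OF summ]) (use mu_C in auto)
    have "measure \<mu> (U N) \<le> (\<Sum>n. measure \<mu> (C (n+N)))" unfolding U_def
      by (rule finite_measure.finite_measure_subadditive_countably[OF fm]) (use Cs sm s2 in auto)
    also have "\<dots> \<le> (\<Sum>n. (1/2)^(n+N))" by (rule suminf_le[OF _ s2 summ]) (use mu_C in auto)
    also have "\<dots> = 2*(1/2)^N"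
    proof -
      have "(\<lambda>n. (1/2::real)^(n+N)) = (\<lambda>n. (1/2)^n * (1/2)^N)" by (simp add: power_add)
      moreover have "(\<Sum>n. (1/2::real)^n * (1/2)^N) = (\<Sum>n. (1/2::real)^n) * (1/2)^N"
        by (rule suminf_mult2[symmetric]) (simp add: summable_geometric)
      moreover have "(\<Sum>n. (1/2::real)^n) = 2" using suminf_geometric[of "1/2::real"] by simp
      ultimately show ?thesis by simp
    qed
    finally show ?thesis .
  qed
  have "measure \<mu> G = 0"
  proof (rule small_zero)
    fix N
    have "measure \<mu> G \<le> measure \<mu> (U N)"
      by (rule finite_measure.finite_measure_mono[OF fm]) (use Us sm in \<open>auto simp: G_def\<close>)
    then show "measure \<mu> G \<le> 2 * (1/2)^N" using muU[of N] by linarith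
  qed simp
  then have Gnull: "G \<in> null_sets \<mu>"
    using Gs sm finite_measure.emeasure_eq_measure[OF fm] by (auto simp: null_sets_def)
  have null: "space M - U N \<in> null_sets \<nu>" for N
  proof -
    have "measure \<nu> (space M - U N) = 0"
    proof (rule small_zero)
      fix K
      have "U (K+N) \<subseteq> U N" unfolding U_def
      proof (rule UN_least)
        fix n
        show "C (n+(K+N)) \<subseteq> (\<Union>n. C (n+N))"
          using UN_upper[of "n+K" UNIV "\<lambda>n. C(n+N)"] by (simp add: add.assoc)
      qed
      moreover have "C (K+N) \<subseteq> U (K+N)" unfolding U_def
        using UN_upper[of 0 UNIV "\<lambda>n. C(n+(K+N))"] by simp
      ultimately have "space M - U N \<subseteq> space M - C (K+N)" by blast
      then have "measure \<nu> (space M - U N) \<le> measure \<nu> (space M - C (K+N))"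
        by (intro finite_measure.finite_measure_mono[OF fn]) (use Cs sn in auto)
      also have "\<dots> \<le> (1/2)^(K+N)" by (rule nu_C)
      also have "\<dots> \<le> 2 * (1/2)^K"
      proof -
        have "(1/2::real)^(K+N) \<le> (1/2)^K" by (rule power_decreasing) auto
        moreover have "(0::real) \<le> (1/2)^K" by simp
        ultimately show ?thesis by linarith
      qed
      finally show "measure \<nu> (space M - U N) \<le> 2 * (1/2)^K" .
    qed simp
    then show ?thesis using Us sn finite_measure.emeasure_eq_measure[OF fn] by (auto simp: null_sets_def)
  qed
  have eq: "space M - G = (\<Union>N. space M - U N)" by (auto simp: G_def)
  have "space M - G \<in> null_sets \<nu>" unfolding eq by (rule null_sets_UN) (rule null)
  then show ?thesis using Gs Gnull by (intro bexI[where x=G] conjI)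
qed

theorem theorem4p6:
  fixes M :: "'a measure" and p :: "'a \<Rightarrow> 'a set \<Rightarrow> real"
    and m :: nat and \<mu> :: "nat \<Rightarrow> 'a measure"
  assumes "standing_space M"
    and "transition_function M p"
    and "is_disjoint_cycle M p m \<mu>"
  shows "\<exists>D :: nat \<Rightarrow> 'a set.
    (\<forall>i\<in>{1..m}. D i \<in> sets M) \<and>
    (\<forall>i\<in>{1..m}. \<forall>j\<in>{1..m}. i \<noteq> j \<longrightarrow> D i \<inter> D j = {}) \<and>
    (\<forall>i\<in>{1..m}. \<forall>j\<in>{1..m}. measure (\<mu> i) (D j) = (if i = j then 1 else 0)) \<and>
    (\<forall>i\<in>{1..m}. AE x in \<mu> i. x \<in> D i \<longrightarrow> p x (D (cyc_next m i)) = 1)"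
proof -
  have cyc: "is_cycle M p m \<mu>" and dis: "\<And>i j. i\<in>{1..m} \<Longrightarrow> j\<in>{1..m} \<Longrightarrow> i \<noteq> j \<Longrightarrow> meas_disjoint M (\<mu> i) (\<mu> j)"
    using assms(3) unfolding is_disjoint_cycle_def by auto
  have smu: "sets (\<mu> i) = sets M" and one: "emeasure (\<mu> i) (space (\<mu> i)) = 1" if "i\<in>{1..m}" for i
    using cyc that unfolding is_cycle_def S_ca_def by auto
  have spmu: "space (\<mu> i) = space M" if "i\<in>{1..m}" for i
    using smu[OF that] sets_eq_imp_space_eq by blast
  have fmu: "finite_measure (\<mu> i)" if "i\<in>{1..m}" for i
    using one[OF that] by (intro finite_measureI) simp
  have mone: "measure (\<mu> i) (space M) = 1" if "i\<in>{1..m}" for i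
    using one[OF that] spmu[OF that] by (simp add: measure_def)
  have "\<forall>i j. \<exists>c. i\<in>{1..m} \<and> j\<in>{1..m} \<and> i\<noteq>j \<longrightarrow> c \<in> sets M \<and> c \<in> null_sets (\<mu> i) \<and> space M - c \<in> null_sets (\<mu> j)"
  proof (intro allI)
    fix i j
    show "\<exists>c. i\<in>{1..m} \<and> j\<in>{1..m} \<and> i\<noteq>j \<longrightarrow> c \<in> sets M \<and> c \<in> null_sets (\<mu> i) \<and> space M - c \<in> null_sets (\<mu> j)"
    proof (cases "i\<in>{1..m} \<and> j\<in>{1..m} \<and> i\<noteq>j")
      case True
      then have "meas_inf M (\<mu> i) (\<mu> j) (space M) = 0"
        using dis[of i j] unfolding meas_disjoint_def by auto
      then have "\<exists>C\<in>sets M. C \<in> null_sets (\<mu> i) \<and> space M - C \<in> null_sets (\<mu> j)"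
        using True by (intro sep_lemma smu fmu) auto
      then show ?thesis by blast
    qed blast
  qed
  then obtain C where C: "\<And>i j. i\<in>{1..m} \<Longrightarrow> j\<in>{1..m} \<Longrightarrow> i\<noteq>j \<Longrightarrow>
      C i j \<in> sets M \<and> C i j \<in> null_sets (\<mu> i) \<and> space M - C i j \<in> null_sets (\<mu> j)"
    by metis
  define E where "E j = space M - (\<Union>i\<in>{1..m}-{j}. space M - C i j)" for j
  define D where "D j = E j - (\<Union>k\<in>{1..m}-{j}. E k)" for j
  have Es: "E j \<in> sets M" if "j\<in>{1..m}" for j
    unfolding E_def using C that by (intro sets.Diff sets.top sets.finite_UN) auto
  have Ds: "D j \<in> sets M" if "j\<in>{1..m}" for j
    unfolding D_def using Es that by (intro sets.Diff sets.finite_UN) auto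
  have Enull: "E j \<in> null_sets (\<mu> i)" if "i\<in>{1..m}" "j\<in>{1..m}" "i\<noteq>j" for i j
  proof (rule null_sets_subset)
    show "C i j \<in> null_sets (\<mu> i)" using C[OF that] by blast
    show "E j \<in> sets (\<mu> i)" using Es[OF that(2)] smu[OF that(1)] by simp
    show "E j \<subseteq> C i j" unfolding E_def using that by auto
  qed
  have Dcnull: "space M - D j \<in> null_sets (\<mu> j)" if "j\<in>{1..m}" for j
  proof (rule null_sets_subset)
    have "(\<Union>i\<in>{1..m}-{j}. space M - C i j) \<in> null_sets (\<mu> j)"
      using C that by (intro null_sets.finite_UN) auto
    moreover have "(\<Union>k\<in>{1..m}-{j}. E k) \<in> null_sets (\<mu> j)"
      using Enull that by (intro null_sets.finite_UN) auto
    ultimately show "(\<Union>i\<in>{1..m}-{j}. space M - C i j) \<union> (\<Union>k\<in>{1..m}-{j}. E k) \<in> null_sets (\<mu> j)"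
      by (rule null_sets.Un)
    show "space M - D j \<in> sets (\<mu> j)" using Ds[OF that] smu[OF that] by auto
    show "space M - D j \<subseteq> (\<Union>i\<in>{1..m}-{j}. space M - C i j) \<union> (\<Union>k\<in>{1..m}-{j}. E k)"
      unfolding D_def E_def by blast
  qed
  have Dsp: "D j \<subseteq> space M" for j unfolding D_def E_def by blast
  have meas: "measure (\<mu> i) (D j) = (if i = j then 1 else 0)" if "i\<in>{1..m}" "j\<in>{1..m}" for i j
  proof (cases "i = j")
    case True
    have "D j = space M - (space M - D j)" using Dsp by blast
    then have "measure (\<mu> j) (D j) = measure (\<mu> j) (space M - (space M - D j))" by simp
    also have "\<dots> = measure (\<mu> j) (space M)"
      using Dcnull[OF that(2)] spmu[OF that(2)] smu[OF that(2)] by (intro measure_Diff_null_set) auto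
    finally show ?thesis using True mone[OF that(2)] by simp
  next
    case False
    have "D j \<in> null_sets (\<mu> i)"
      by (rule null_sets_subset[OF Enull[OF that False]]) (use Ds[OF that(2)] smu[OF that(1)] in \<open>auto simp: D_def\<close>)
    then show ?thesis using False by (simp add: measure_def null_setsD1)
  qed
  have AEp: "AE x in \<mu> i. x \<in> D i \<longrightarrow> p x (D (cyc_next m i)) = 1" if i: "i\<in>{1..m}" for i
  proof -
    define n where "n = cyc_next m i"
    have n: "n \<in> {1..m}" using i unfolding n_def cyc_next_def by auto
    have tf: "\<And>x E. x\<in>space M \<Longrightarrow> E\<in>sets M \<Longrightarrow> 0 \<le> p x E \<and> p x E \<le> 1"
      and pm: "\<And>E. E\<in>sets M \<Longrightarrow> (\<lambda>x. p x E) \<in> borel_measurable M"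
      using assms(2) unfolding transition_function_def by auto
    have "measure (\<mu> n) (D n) = markov_op p (\<mu> i) (D n)"
      using cyc i Ds[OF n] unfolding is_cycle_def n_def by auto
    then have int1: "(\<integral>x. p x (D n) \<partial>\<mu> i) = 1" using meas[OF n n] unfolding markov_op_def by simp
    let ?f = "\<lambda>x. 1 - p x (D n)"
    have fm: "?f \<in> borel_measurable (\<mu> i)"
    proof -
      have "(\<lambda>x. p x (D n)) \<in> borel_measurable (\<mu> i)"
        unfolding measurable_cong_sets[OF smu[OF i] refl, of borel] by (rule pm[OF Ds[OF n]])
      then show ?thesis by (intro borel_measurable_diff borel_measurable_const)
    qed
    have bnd: "AE x in \<mu> i. norm (?f x) \<le> 1"
      using AE_space[of "\<mu> i"] tf[OF _ Ds[OF n]] spmu[OF i] by (auto elim!: eventually_mono)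
    have nn: "AE x in \<mu> i. 0 \<le> ?f x"
      using AE_space[of "\<mu> i"] tf[OF _ Ds[OF n]] spmu[OF i] by (auto elim!: eventually_mono)
    have intf: "integrable (\<mu> i) ?f"
      by (rule finite_measure.integrable_const_bound[OF fmu[OF i] bnd fm])
    have intp: "integrable (\<mu> i) (\<lambda>x. p x (D n))"
    proof -
      have "integrable (\<mu> i) (\<lambda>x. 1 - ?f x)"
        by (rule Bochner_Integration.integrable_diff[OF finite_measure.integrable_const[OF fmu[OF i]] intf])
      then show ?thesis by simp
    qed
    have "(\<integral>x. ?f x \<partial>\<mu> i) = (\<integral>x. 1 \<partial>\<mu> i) - (\<integral>x. p x (D n) \<partial>\<mu> i)"
      using intp finite_measure.integrable_const[OF fmu[OF i]] by (intro Bochner_Integration.integral_diff) auto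
    also have "\<dots> = 0" using int1 mone[OF i] spmu[OF i] by simp
    finally have "AE x in \<mu> i. ?f x = 0" using integral_nonneg_eq_0_iff_AE[OF intf nn] by simp
    then show ?thesis unfolding n_def by (auto elim!: eventually_mono)
  qed
  show ?thesis
  proof (intro exI[of _ D] conjI ballI impI)
    show "\<And>i. i\<in>{1..m} \<Longrightarrow> D i \<in> sets M" by (rule Ds)
    show "\<And>i j. i\<in>{1..m} \<Longrightarrow> j\<in>{1..m} \<Longrightarrow> i \<noteq> j \<Longrightarrow> D i \<inter> D j = {}"
      unfolding D_def by blast
    show "\<And>i j. i\<in>{1..m} \<Longrightarrow> j\<in>{1..m} \<Longrightarrow> measure (\<mu> i) (D j) = (if i = j then 1 else 0)" by (rule meas)
    show "\<And>i. i\<in>{1..m} \<Longrightarrow> AE x in \<mu> i. x \<in> D i \<longrightarrow> p x (D (cyc_next m i)) = 1" by (rule AEp)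
  qed
qed

end
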